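(* Let $\nu\in\mathcal H^+$ and let $S:\mathcal G\to\mathbb R_+$ satisfy $S(0)=0$, $S(g)\le S(g+h)$ for all $g,h\in\mathcal G$, $|S(g)-S(h)|\le K\|g-h\|_{\mathrm{Was}}$ for all $g,h$, and additionally $$\inf\{S(\delta_m):m\in\mathcal M\}>0.$$ Then there exists $U>0$ such that for every $u\in[0,U]$ there is a measure $\rho^{(u)}_*\in\mathcal H^+$ with $u\nu=F_{\rho^{(u)}_*}\cdot\rho^{(u)}_*$, i.e. $\rho^{(u)}_*$ is a finite equilibrium of the equation $\rho_t=\rho_0+ut\nu-\int_0^tD\rho_s\,ds$.
   Context: $\mathcal M$ is a complete separable metric space; $\mathcal G$ the finite integer-valued Borel measures on $\mathcal M$; $\mathcal H^+$ the finite nonnegative Borel measures on $\mathcal M$. $\|\cdot\|_{\mathrm{Was}}$ is the Wasserstein norm $\sup\{|\int f d\pi|:\|f\|_{\mathrm{Lip}}\le1\}$ with $\|f\|_{\mathrm{Lip}}=\sup|f|+\sup_{x\ne y}|f(x)-f(y)|/d(x,y)$. $X^\pi$ is a Poisson random measure with intensity $\pi$, $F_\pi(x):=\mathbb E[S(X^\pi+\delta_x)-S(X^\pi)]$, $F_\pi\cdot\pi$ denotes the measure with density $F_\pi$ with respect to $\pi$, and $D\pi:=F_\pi\cdot\pi$. *)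

theory Defs
  imports "HOL-Analysis.Analysis" "HOL-Library.Multiset"
begin

text \<open>Elements of the space G of finite (nonnegative) integer-valued Borel measures on
  the Polish space 'm are represented as finite multisets of points:
  g corresponds to the sum of the Dirac masses at the points of g.
  The zero measure is the empty multiset, g + h is multiset sum, and the
  Dirac mass at x is the singleton multiset.\<close>

definition lip_norm_le_one :: "('m::metric_space \<Rightarrow> real) \<Rightarrow> bool" where
  "lip_norm_le_one f \<longleftrightarrow>
     bdd_above (range (\<lambda>x. \<bar>f x\<bar>)) \<and>
     bdd_above {\<bar>f x - f y\<bar> / dist x y | x y. x \<noteq> y} \<and>
     Sup (range (\<lambda>x. \<bar>f x\<bar>)) + Sup (insert 0 {\<bar>f x - f y\<bar> / dist x y | x y. x \<noteq> y}) \<le> 1"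

definition mset_integral :: "('m \<Rightarrow> real) \<Rightarrow> 'm multiset \<Rightarrow> real" where
  "mset_integral f g = sum_mset (image_mset f g)"

definition was_dist :: "'m::metric_space multiset \<Rightarrow> 'm multiset \<Rightarrow> real" where
  "was_dist g h = Sup {\<bar>mset_integral f g - mset_integral f h\<bar> | f. lip_norm_le_one f}"

text \<open>Expectation of Phi(X) where X is a Poisson random measure with finite intensity pi:
  the total number of points is Poisson(pi(M)) and, given the number n, the points are
  i.i.d. with law pi / pi(M).\<close>
definition poisson_expectation :: "'m measure \<Rightarrow> ('m multiset \<Rightarrow> real) \<Rightarrow> real" where
  "poisson_expectation \<pi> \<Phi> =
     exp (- measure \<pi> (space \<pi>)) *
     (\<Sum>n. (\<integral>x. \<Phi> (mset (map x [0..<n])) \<partial>(PiM {..<n} (\<lambda>_. \<pi>))) / fact n)"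

definition F_fun :: "('m multiset \<Rightarrow> real) \<Rightarrow> 'm measure \<Rightarrow> 'm \<Rightarrow> real" where
  "F_fun S \<pi> x = poisson_expectation \<pi> (\<lambda>X. S (X + {#x#}) - S X)"

end

theory Submission
  imports Defs
begin

lemma lip_adm:
  fixes f :: "'m::metric_space \<Rightarrow> real"
  assumes "lip_norm_le_one f"
  shows "\<bar>f x\<bar> \<le> 1" "\<bar>f x - f y\<bar> \<le> dist x y"
proof -
  let ?a = "Sup (range (\<lambda>x. \<bar>f x\<bar>))"
  let ?L = "{\<bar>f x - f y\<bar> / dist x y | x y. x \<noteq> y}"
  let ?b = "Sup (insert 0 ?L)"
  have ba: "bdd_above (range (\<lambda>x. \<bar>f x\<bar>))" "bdd_above ?L" and s: "?a + ?b \<le> 1"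
    using assms unfolding lip_norm_le_one_def by auto
  have ax: "\<bar>f z\<bar> \<le> ?a" for z by (rule cSup_upper[OF _ ba(1)]) auto
  have bd: "bdd_above (insert 0 ?L)" using ba(2) by simp
  have b0: "0 \<le> ?b" by (rule cSup_upper[OF _ bd]) auto
  have a0: "0 \<le> ?a" using ax[of x] by linarith
  show "\<bar>f x\<bar> \<le> 1" using ax[of x] b0 s by linarith
  show "\<bar>f x - f y\<bar> \<le> dist x y"
  proof (cases "x = y")
    case True then show ?thesis by simp
  next
    case False
    have "\<bar>f x - f y\<bar> / dist x y \<le> ?b" by (rule cSup_upper[OF _ bd]) (use False in blast)
    then have "\<bar>f x - f y\<bar> / dist x y \<le> 1" using a0 s by linarith
    then show ?thesis using False by (simp add: divide_le_eq)
  qed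
qed

lemma lip_zero: "lip_norm_le_one (\<lambda>_::'m::metric_space. 0::real)"
proof -
  have "{\<bar>(0::real) - 0\<bar> / dist x y | x y::'m. x \<noteq> y} \<subseteq> {0}" by auto
  then have eq: "insert 0 {\<bar>(0::real) - 0\<bar> / dist x y | x y::'m. x \<noteq> y} = {0}" by auto
  show ?thesis unfolding lip_norm_le_one_def eq by simp
qed

lemma mset_integral_add: "mset_integral f (A + B) = mset_integral f A + mset_integral f B"
  unfolding mset_integral_def by simp

lemma mset_integral_add_mset: "mset_integral f (add_mset x A) = f x + mset_integral f A"
  unfolding mset_integral_def by simp

lemma mset_integral_single: "mset_integral f {#x#} = f x"
  unfolding mset_integral_def by simp

lemma mset_integral_map: "mset_integral f (mset (map y [0..<n])) = (\<Sum>i<n. f (y i))"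
  unfolding mset_integral_def by (induction n) auto

lemma mset_integral_abs_le:
  assumes "\<And>x. \<bar>f x\<bar> \<le> 1" shows "\<bar>mset_integral f A\<bar> \<le> real (size A)"
  unfolding mset_integral_def
proof (induction A)
  case empty then show ?case by simp
next
  case (add x A)
  have "\<bar>f x\<bar> \<le> 1" by (rule assms)
  then show ?case using add by simp
qed

lemma was_dist_bdd:
  "bdd_above {\<bar>mset_integral f g - mset_integral f h\<bar> | f. lip_norm_le_one (f::'m::metric_space \<Rightarrow> real)}"
proof (rule bdd_aboveI)
  fix t assume "t \<in> {\<bar>mset_integral f g - mset_integral f h\<bar> | f. lip_norm_le_one (f::'m \<Rightarrow> real)}"
  then obtain f where f: "lip_norm_le_one f" and t: "t = \<bar>mset_integral f g - mset_integral f h\<bar>" by auto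
  have "\<bar>mset_integral f g\<bar> \<le> real (size g)" "\<bar>mset_integral f h\<bar> \<le> real (size h)"
    using lip_adm(1)[OF f] by (auto intro!: mset_integral_abs_le)
  then show "t \<le> real (size g) + real (size h)" using t by linarith
qed

lemma was_dist_nonneg: "0 \<le> was_dist (g::'m::metric_space multiset) h"
proof -
  have "\<bar>mset_integral (\<lambda>_. 0) g - mset_integral (\<lambda>_. 0) h\<bar> \<in> {\<bar>mset_integral f g - mset_integral f h\<bar> | f. lip_norm_le_one (f::'m \<Rightarrow> real)}"
    using lip_zero by blast
  from cSup_upper[OF this was_dist_bdd] show ?thesis unfolding was_dist_def by (simp add: mset_integral_def)
qed

lemma was_dist_le:
  assumes "\<And>f. lip_norm_le_one (f::'m::metric_space \<Rightarrow> real) \<Longrightarrow> \<bar>mset_integral f g - mset_integral f h\<bar> \<le> D"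
  shows "was_dist g h \<le> D"
  unfolding was_dist_def
  by (rule cSup_least) (use lip_zero assms in auto)

lemma was_dist_single: "was_dist (g + {#x#}) (g::'m::metric_space multiset) \<le> 1"
  by (rule was_dist_le) (auto simp: mset_integral_add_mset lip_adm)

lemma was_dist_maps:
  "was_dist (mset (map y [0..<n]) + g) (mset (map z [0..<n]) + (g::'m::metric_space multiset))
     \<le> (\<Sum>i<n. dist (y i) (z i))"
proof (rule was_dist_le)
  fix f :: "'m \<Rightarrow> real" assume f: "lip_norm_le_one f"
  have "\<bar>mset_integral f (mset (map y [0..<n]) + g) - mset_integral f (mset (map z [0..<n]) + g)\<bar>
      = \<bar>\<Sum>i<n. f (y i) - f (z i)\<bar>"
    by (simp only: mset_integral_add mset_integral_map) (simp add: sum_subtractf)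
  also have "\<dots> \<le> (\<Sum>i<n. \<bar>f (y i) - f (z i)\<bar>)" by (rule sum_abs)
  also have "\<dots> \<le> (\<Sum>i<n. dist (y i) (z i))" by (rule sum_mono) (rule lip_adm(2)[OF f])
  finally show "\<bar>mset_integral f (mset (map y [0..<n]) + g) - mset_integral f (mset (map z [0..<n]) + g)\<bar>
      \<le> (\<Sum>i<n. dist (y i) (z i))" .
qed

lemma was_dist_pts:
  "was_dist (g + {#x#}) (g + {#x'#}) \<le> dist x (x'::'m::metric_space)"
  by (rule was_dist_le) (auto simp: mset_integral_add_mset lip_adm)

lemma cont_map:
  fixes G :: "'m::polish_space multiset \<Rightarrow> real"
  assumes lip: "\<And>y z. \<bar>G (mset (map y [0..<n])) - G (mset (map z [0..<n]))\<bar> \<le> L * (\<Sum>i<n. dist (y i) (z i))"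
  shows "continuous_on UNIV (\<lambda>z::nat \<Rightarrow> 'm. G (mset (map z [0..<n])))"
proof -
  have "isCont (\<lambda>z::nat \<Rightarrow> 'm. G (mset (map z [0..<n]))) z0" for z0
  proof -
    have ci: "((\<lambda>z::nat\<Rightarrow>'m. z i) \<longlongrightarrow> z0 i) (at z0)" for i
      using continuous_on_product_coordinates[of i] 
      by (auto simp add: continuous_on_def)
    have "((\<lambda>z. \<Sum>i<n. dist (z i) (z0 i)) \<longlongrightarrow> (\<Sum>i<n. dist (z0 i) (z0 i))) (at z0)"
      by (intro tendsto_sum tendsto_dist ci tendsto_const)
    then have s0: "((\<lambda>z. L * (\<Sum>i<n. dist (z i) (z0 i))) \<longlongrightarrow> 0) (at z0)"
      using tendsto_mult_right_zero by fastforce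
    have "((\<lambda>z. G (mset (map z [0..<n])) - G (mset (map z0 [0..<n]))) \<longlongrightarrow> 0) (at z0)"
      by (rule Lim_null_comparison[OF _ s0]) (use lip in \<open>auto intro!: always_eventually\<close>)
    then show ?thesis unfolding isCont_def by (rule LIM_zero_cancel)
  qed
  then show ?thesis by (simp add: continuous_at_imp_continuous_on)
qed

lemma meas_map:
  fixes G :: "'m::polish_space multiset \<Rightarrow> real"
  assumes sets: "sets \<pi> = sets borel"
    and lip: "\<And>y z. \<bar>G (mset (map y [0..<n])) - G (mset (map z [0..<n]))\<bar> \<le> L * (\<Sum>i<n. dist (y i) (z i))"
  shows "(\<lambda>y. G (mset (map y [0..<n]))) \<in> borel_measurable (PiM {..<n} (\<lambda>_. \<pi>))"
proof -
  have m1: "(\<lambda>z::nat\<Rightarrow>'m. G (mset (map z [0..<n]))) \<in> borel_measurable (PiM UNIV (\<lambda>_. borel))"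
  proof -
    have e: "sets (PiM UNIV (\<lambda>_. borel)) = sets (borel::(nat\<Rightarrow>'m) measure)" by (rule sets_PiM_equal_borel)
    show ?thesis
      using borel_measurable_continuous_onI[OF cont_map[OF lip]]
      by (simp add: measurable_cong_sets[OF e refl])
  qed
  have m2: "(\<lambda>y i. y i) \<in> measurable (PiM {..<n} (\<lambda>_. \<pi>)) (PiM UNIV (\<lambda>_. (borel :: 'm measure)))"
  proof (rule measurable_PiM_single')
    fix i :: nat
    show "(\<lambda>y. y i) \<in> measurable (PiM {..<n} (\<lambda>_. \<pi>)) borel"
    proof (cases "i < n")
      case True
      then have "(\<lambda>y. y i) \<in> measurable (PiM {..<n} (\<lambda>_. \<pi>)) \<pi>"
        by (intro measurable_component_singleton) simp
      then show ?thesis using measurable_cong_sets[OF refl sets] by blast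
    next
      case False
      have "(\<lambda>y. undefined) \<in> measurable (PiM {..<n} (\<lambda>_. \<pi>)) (borel::'m measure)" by simp
      then show ?thesis
        by (rule measurable_cong[THEN iffD1, rotated]) (use False in \<open>auto simp: space_PiM PiE_def extensional_def\<close>)
    qed
  qed auto
  from measurable_comp[OF m2 m1] show ?thesis by (simp add: comp_def)
qed

lemma PiM_space_measure:
  assumes fm: "finite_measure \<pi>"
  shows "measure (PiM {..<n} (\<lambda>_. \<pi>)) (space (PiM {..<n} (\<lambda>_. \<pi>))) = (measure \<pi> (space \<pi>)) ^ n"
    and "finite_measure (PiM {..<n} (\<lambda>_. \<pi>))"
proof -
  interpret finite_measure \<pi> by fact
  interpret product_sigma_finite "\<lambda>_. \<pi>" by standard
  have e: "emeasure (PiM {..<n} (\<lambda>_. \<pi>)) (space (PiM {..<n} (\<lambda>_. \<pi>))) = ennreal ((measure \<pi> (space \<pi>)) ^ n)"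
    unfolding space_PiM by (subst emeasure_PiM) (auto simp: emeasure_eq_measure ennreal_power)
  then show "measure (PiM {..<n} (\<lambda>_. \<pi>)) (space (PiM {..<n} (\<lambda>_. \<pi>))) = (measure \<pi> (space \<pi>)) ^ n"
    by (simp add: measure_def)
  show "finite_measure (PiM {..<n} (\<lambda>_. \<pi>))" by (rule finite_measureI) (simp add: e)
qed

lemma term_bound:
  assumes fm: "finite_measure \<pi>"
    and meas: "\<Phi> \<in> borel_measurable (PiM {..<n} (\<lambda>_. \<pi>))"
    and bd: "\<And>y. \<bar>\<Phi> y\<bar> \<le> B"
  shows "integrable (PiM {..<n} (\<lambda>_. \<pi>)) \<Phi>"
    and "\<bar>\<integral>y. \<Phi> y \<partial>(PiM {..<n} (\<lambda>_. \<pi>))\<bar> \<le> B * (measure \<pi> (space \<pi>)) ^ n"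
proof -
  interpret P: finite_measure "PiM {..<n} (\<lambda>_. \<pi>)" using PiM_space_measure(2)[OF fm] .
  show i: "integrable (PiM {..<n} (\<lambda>_. \<pi>)) \<Phi>"
    by (rule P.integrable_const_bound[where B=B]) (use meas bd in auto)
  have "\<bar>\<integral>y. \<Phi> y \<partial>(PiM {..<n} (\<lambda>_. \<pi>))\<bar> \<le> (\<integral>y. \<bar>\<Phi> y\<bar> \<partial>(PiM {..<n} (\<lambda>_. \<pi>)))"
    by (rule integral_abs_bound)
  also have "\<dots> \<le> (\<integral>y. B \<partial>(PiM {..<n} (\<lambda>_. \<pi>)))"
    by (rule integral_mono) (use i bd in auto)
  also have "\<dots> = B * (measure \<pi> (space \<pi>)) ^ n"
    using PiM_space_measure(1)[OF fm] by simp
  finally show "\<bar>\<integral>y. \<Phi> y \<partial>(PiM {..<n} (\<lambda>_. \<pi>))\<bar> \<le> B * (measure \<pi> (space \<pi>)) ^ n" .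
qed

lemma exp_sums_real: "(\<lambda>n. x ^ n / fact n) sums exp (x::real)"
  using exp_converges[of x] by (simp add: divide_inverse mult.commute scaleR_conv_of_real)

definition pterm :: "'m measure \<Rightarrow> ('m multiset \<Rightarrow> real) \<Rightarrow> nat \<Rightarrow> real" where
  "pterm \<pi> \<Phi> n = (\<integral>x. \<Phi> (mset (map x [0..<n])) \<partial>(PiM {..<n} (\<lambda>_. \<pi>))) / fact n"

lemma pe_def2: "poisson_expectation \<pi> \<Phi> = exp (- measure \<pi> (space \<pi>)) * suminf (pterm \<pi> \<Phi>)"
  unfolding poisson_expectation_def pterm_def ..

lemma pterm_bound:
  assumes fm: "finite_measure \<pi>"
    and meas: "\<And>n. (\<lambda>y. \<Phi> (mset (map y [0..<n]))) \<in> borel_measurable (PiM {..<n} (\<lambda>_. \<pi>))"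
    and bd: "\<And>X. \<bar>\<Phi> X\<bar> \<le> B"
  shows "\<bar>pterm \<pi> \<Phi> n\<bar> \<le> B * (measure \<pi> (space \<pi>)) ^ n / fact n"
  using term_bound(2)[OF fm meas bd] unfolding pterm_def by (simp add: divide_right_mono)

lemma pterm_summable:
  assumes fm: "finite_measure \<pi>"
    and meas: "\<And>n. (\<lambda>y. \<Phi> (mset (map y [0..<n]))) \<in> borel_measurable (PiM {..<n} (\<lambda>_. \<pi>))"
    and bd: "\<And>X. \<bar>\<Phi> X\<bar> \<le> B"
  shows "summable (pterm \<pi> \<Phi>)" "summable (\<lambda>n. \<bar>pterm \<pi> \<Phi> n\<bar>)"
    "\<bar>suminf (pterm \<pi> \<Phi>)\<bar> \<le> B * exp (measure \<pi> (space \<pi>))"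
proof -
  let ?V = "measure \<pi> (space \<pi>)"
  have s: "(\<lambda>n. B * ?V ^ n / fact n) sums (B * exp ?V)"
    using sums_mult[OF exp_sums_real[of ?V], of B] by (simp add: mult.assoc)
  show sa: "summable (\<lambda>n. \<bar>pterm \<pi> \<Phi> n\<bar>)"
    by (rule summable_comparison_test[OF _ sums_summable[OF s]]) (use pterm_bound[OF fm meas bd] in auto)
  show "summable (pterm \<pi> \<Phi>)" using sa summable_rabs_cancel by blast
  have "\<bar>suminf (pterm \<pi> \<Phi>)\<bar> \<le> (\<Sum>n. \<bar>pterm \<pi> \<Phi> n\<bar>)" by (rule summable_rabs[OF sa])
  also have "\<dots> \<le> (\<Sum>n. B * ?V ^ n / fact n)"
    by (rule suminf_le[OF _ sa sums_summable[OF s]]) (use pterm_bound[OF fm meas bd] in auto)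
  also have "\<dots> = B * exp ?V" using s by (simp add: sums_iff)
  finally show "\<bar>suminf (pterm \<pi> \<Phi>)\<bar> \<le> B * exp ?V" .
qed

lemma pe_bound:
  assumes fm: "finite_measure \<pi>"
    and meas: "\<And>n. (\<lambda>y. \<Phi> (mset (map y [0..<n]))) \<in> borel_measurable (PiM {..<n} (\<lambda>_. \<pi>))"
    and bd: "\<And>X. \<bar>\<Phi> X\<bar> \<le> B"
  shows "\<bar>poisson_expectation \<pi> \<Phi>\<bar> \<le> B"
proof -
  have "\<bar>poisson_expectation \<pi> \<Phi>\<bar> = exp (- measure \<pi> (space \<pi>)) * \<bar>suminf (pterm \<pi> \<Phi>)\<bar>"
    unfolding pe_def2 by (simp add: abs_mult)
  also have "\<dots> \<le> exp (- measure \<pi> (space \<pi>)) * (B * exp (measure \<pi> (space \<pi>)))"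
    by (rule mult_left_mono[OF pterm_summable(3)[OF fm meas bd]]) simp
  also have "\<dots> = B" by (simp add: exp_minus field_simps)
  finally show ?thesis .
qed

lemma pe_diff:
  assumes fm: "finite_measure \<pi>"
    and meas1: "\<And>n. (\<lambda>y. \<Phi>1 (mset (map y [0..<n]))) \<in> borel_measurable (PiM {..<n} (\<lambda>_. \<pi>))"
    and bd1: "\<And>X. \<bar>\<Phi>1 X\<bar> \<le> B1"
    and meas2: "\<And>n. (\<lambda>y. \<Phi>2 (mset (map y [0..<n]))) \<in> borel_measurable (PiM {..<n} (\<lambda>_. \<pi>))"
    and bd2: "\<And>X. \<bar>\<Phi>2 X\<bar> \<le> B2"
  shows "poisson_expectation \<pi> (\<lambda>X. \<Phi>1 X - \<Phi>2 X) = poisson_expectation \<pi> \<Phi>1 - poisson_expectation \<pi> \<Phi>2"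
proof -
  have t: "pterm \<pi> (\<lambda>X. \<Phi>1 X - \<Phi>2 X) n = pterm \<pi> \<Phi>1 n - pterm \<pi> \<Phi>2 n" for n
    unfolding pterm_def
    by (subst Bochner_Integration.integral_diff[OF term_bound(1)[OF fm meas1 bd1] term_bound(1)[OF fm meas2 bd2]])
       (simp add: diff_divide_distrib)
  have "suminf (pterm \<pi> (\<lambda>X. \<Phi>1 X - \<Phi>2 X)) = suminf (pterm \<pi> \<Phi>1) - suminf (pterm \<pi> \<Phi>2)"
    unfolding t by (rule suminf_diff[symmetric]) (use pterm_summable(1)[OF fm meas1 bd1] pterm_summable(1)[OF fm meas2 bd2] in auto)
  then show ?thesis unfolding pe_def2 by (simp add: right_diff_distrib)
qed

locale Sctx =
  fixes S :: "'m::polish_space multiset \<Rightarrow> real" and K :: real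
  assumes S_nonneg: "\<And>g. S g \<ge> 0"
    and S_zero: "S {#} = 0"
    and S_mono: "\<And>g h. S g \<le> S (g + h)"
    and S_lip: "\<And>g h. \<bar>S g - S h\<bar> \<le> K * was_dist g h"
    and S_inf: "(INF m. S {#m#}) > 0"
begin

definition "c0 = (INF m. S {#m#})"

lemma c0_pos: "c0 > 0" using S_inf unfolding c0_def .

lemma S_single: "S {#m#} \<ge> c0"
  unfolding c0_def by (rule cINF_lower) (auto intro!: bdd_belowI[where m=0] S_nonneg)

lemma K_pos: "K > 0"
proof (rule ccontr)
  assume "\<not> K > 0"
  then have "K * was_dist {#undefined::'m#} {#} \<le> 0" using was_dist_nonneg[of "{#undefined::'m#}" "{#}"] by (intro mult_nonpos_nonneg) auto
  moreover have "\<bar>S {#undefined::'m#} - S {#}\<bar> \<le> K * was_dist {#undefined::'m#} {#}" by (rule S_lip)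
  ultimately show False using S_single[of undefined] c0_pos S_zero by linarith
qed

lemma S_lip_le: "was_dist g h \<le> D \<Longrightarrow> \<bar>S g - S h\<bar> \<le> K * D"
  using S_lip[of g h] K_pos by (smt (verit) mult_left_mono)

definition PhiF :: "'m \<Rightarrow> 'm multiset \<Rightarrow> real" where
  "PhiF x X = S (X + {#x#}) - S X"

lemma PhiF_bounds: "0 \<le> PhiF x X" "PhiF x X \<le> K" "\<bar>PhiF x X\<bar> \<le> K"
proof -
  show "0 \<le> PhiF x X" unfolding PhiF_def using S_mono[of X "{#x#}"] by simp
  moreover have "\<bar>S (X + {#x#}) - S X\<bar> \<le> K * 1" by (rule S_lip_le[OF was_dist_single])
  ultimately show "PhiF x X \<le> K" "\<bar>PhiF x X\<bar> \<le> K" unfolding PhiF_def by auto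
qed

lemma PhiF_lipx: "\<bar>PhiF x X - PhiF x' X\<bar> \<le> K * dist x x'"
  unfolding PhiF_def using S_lip_le[OF was_dist_pts[of X x x']] by simp

lemma S_maps: "\<bar>S (mset (map y [0..<n]) + g) - S (mset (map z [0..<n]) + g)\<bar> \<le> K * (\<Sum>i<n. dist (y i) (z i))"
  by (rule S_lip_le[OF was_dist_maps])

lemma PhiF_meas:
  assumes "sets \<pi> = sets borel"
  shows "(\<lambda>y. PhiF x (mset (map y [0..<n]))) \<in> borel_measurable (PiM {..<n} (\<lambda>_. \<pi>))"
proof (rule meas_map[OF assms, where L="2*K"])
  fix y z :: "nat \<Rightarrow> 'm"
  have "\<bar>S (mset (map y [0..<n]) + {#x#}) - S (mset (map z [0..<n]) + {#x#})\<bar> \<le> K * (\<Sum>i<n. dist (y i) (z i))"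
    by (rule S_maps)
  moreover have "\<bar>S (mset (map y [0..<n]) + {#}) - S (mset (map z [0..<n]) + {#})\<bar> \<le> K * (\<Sum>i<n. dist (y i) (z i))"
    by (rule S_maps)
  ultimately show "\<bar>PhiF x (mset (map y [0..<n])) - PhiF x (mset (map z [0..<n]))\<bar> \<le> 2 * K * (\<Sum>i<n. dist (y i) (z i))"
    unfolding PhiF_def by simp
qed

lemma F_eq: "F_fun S \<pi> x = poisson_expectation \<pi> (PhiF x)"
  unfolding F_fun_def PhiF_def ..

lemma F_upper:
  assumes "sets \<pi> = sets borel" "finite_measure \<pi>"
  shows "F_fun S \<pi> x \<le> K"
  using pe_bound[OF assms(2) PhiF_meas[OF assms(1)] PhiF_bounds(3), of x] unfolding F_eq by simp

lemma F_lower: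
  assumes "sets \<pi> = sets borel" "finite_measure \<pi>"
  shows "F_fun S \<pi> x \<ge> exp (- measure \<pi> (space \<pi>)) * c0"
proof -
  note ps = pterm_summable[OF assms(2) PhiF_meas[OF assms(1)] PhiF_bounds(3)]
  have nn: "0 \<le> pterm \<pi> (PhiF x) n" for n
    unfolding pterm_def by (auto intro!: divide_nonneg_pos integral_nonneg_AE simp: PhiF_bounds)
  have p0: "pterm \<pi> (PhiF x) 0 = S {#x#}"
    unfolding pterm_def by (simp add: PiM_empty PhiF_def S_zero)
  have "sum (pterm \<pi> (PhiF x)) {..<1} \<le> suminf (pterm \<pi> (PhiF x))"
    by (rule sum_le_suminf[OF ps(1)]) (use nn in auto)
  then have "c0 \<le> suminf (pterm \<pi> (PhiF x))" using p0 S_single[of x] by simp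
  then show ?thesis unfolding F_eq pe_def2 by (simp add: mult_left_mono)
qed

lemma F_lipx:
  assumes "sets \<pi> = sets borel" "finite_measure \<pi>"
  shows "\<bar>F_fun S \<pi> x - F_fun S \<pi> x'\<bar> \<le> K * dist x x'"
proof -
  have "F_fun S \<pi> x - F_fun S \<pi> x' = poisson_expectation \<pi> (\<lambda>X. PhiF x X - PhiF x' X)"
    unfolding F_eq
    by (rule pe_diff[OF assms(2) PhiF_meas[OF assms(1)] PhiF_bounds(3) PhiF_meas[OF assms(1)] PhiF_bounds(3), symmetric])
  also have "\<bar>\<dots>\<bar> \<le> K * dist x x'"
    by (rule pe_bound[OF assms(2) _ PhiF_lipx])
       (intro borel_measurable_diff PhiF_meas[OF assms(1)])
  finally show ?thesis .
qed

lemma F_meas: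
  assumes "sets \<pi> = sets borel" "finite_measure \<pi>"
  shows "F_fun S \<pi> \<in> borel_measurable borel"
proof -
  have "K-lipschitz_on UNIV (F_fun S \<pi>)"
    by (rule lipschitz_onI) (use F_lipx[OF assms] K_pos in \<open>auto simp: dist_real_def\<close>)
  then show ?thesis by (intro borel_measurable_continuous_onI lipschitz_on_continuous_on)
qed

end

lemma dens_finite:
  assumes fm: "finite_measure \<nu>" and hm: "h \<in> borel_measurable \<nu>" and h0: "\<And>x. 0 \<le> h x" and h1: "\<And>x. h x \<le> 1"
  shows "finite_measure (density \<nu> (\<lambda>x. ennreal (h x)))"
    and "measure (density \<nu> (\<lambda>x. ennreal (h x))) (space (density \<nu> (\<lambda>x. ennreal (h x)))) = (\<integral>x. h x \<partial>\<nu>)"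
    and "integrable \<nu> h"
proof -
  interpret finite_measure \<nu> by fact
  show hi: "integrable \<nu> h"
    by (rule integrable_const_bound[where B=1]) (use hm h0 h1 in auto)
  have e: "emeasure (density \<nu> (\<lambda>x. ennreal (h x))) (space (density \<nu> (\<lambda>x. ennreal (h x)))) = ennreal (\<integral>x. h x \<partial>\<nu>)"
    using hm by (simp add: emeasure_density nn_integral_eq_integral[OF hi] h0)
  then show "finite_measure (density \<nu> (\<lambda>x. ennreal (h x)))" by (intro finite_measureI) simp
  show "measure (density \<nu> (\<lambda>x. ennreal (h x))) (space (density \<nu> (\<lambda>x. ennreal (h x)))) = (\<integral>x. h x \<partial>\<nu>)"
    using e by (simp add: measure_def integral_nonneg_AE h0)
qed

lemma indicator_PiE_prod:
  assumes "y \<in> extensional I" "finite I"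
  shows "(indicator (PiE I A) y :: ennreal) = (\<Prod>i\<in>I. indicator (A i) (y i))"
proof (cases "\<forall>i\<in>I. y i \<in> A i")
  case True
  then have "y \<in> PiE I A" using assms by (auto simp: PiE_def)
  then show ?thesis using True by simp
next
  case False
  then obtain j where j: "j \<in> I" "y j \<notin> A j" by auto
  then have "y \<notin> PiE I A" by auto
  moreover have "(\<Prod>i\<in>I. (indicator (A i) (y i) :: ennreal)) = 0"
    using j assms(2) by (intro prod_zero bexI[of _ j]) auto
  ultimately show ?thesis by simp
qed

lemma PiM_density:
  assumes fm: "finite_measure \<nu>" and hm: "h \<in> borel_measurable \<nu>" and h0: "\<And>x. 0 \<le> h x" and h1: "\<And>x. h x \<le> 1"
  shows "PiM {..<n::nat} (\<lambda>_. density \<nu> (\<lambda>x. ennreal (h x))) = density (PiM {..<n} (\<lambda>_. \<nu>)) (\<lambda>y. ennreal (\<Prod>i<n. h (y i)))"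
proof -
  let ?D = "density \<nu> (\<lambda>x. ennreal (h x))"
  interpret fD: finite_measure ?D by (rule dens_finite(1)[OF assms])
  interpret D: product_sigma_finite "\<lambda>_. ?D" by standard
  interpret fN: finite_measure \<nu> by fact
  interpret N: product_sigma_finite "\<lambda>_. \<nu>" by standard
  have "density (PiM {..<n} (\<lambda>_. \<nu>)) (\<lambda>y. ennreal (\<Prod>i<n. h (y i))) = PiM {..<n} (\<lambda>_. ?D)"
  proof (rule D.PiM_eqI)
    show "finite {..<n}" by (rule finite_lessThan)
  next
    show "sets (density (PiM {..<n} (\<lambda>_. \<nu>)) (\<lambda>y. ennreal (\<Prod>i<n. h (y i)))) = sets (PiM {..<n} (\<lambda>_. ?D))"
      unfolding sets_density by (rule sets_PiM_cong) simp_all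
  next
    fix A assume A: "\<And>i. i \<in> {..<n} \<Longrightarrow> A i \<in> sets ?D"
    then have A': "\<And>i. i \<in> {..<n} \<Longrightarrow> A i \<in> sets \<nu>" by simp
    have hmi: "(\<lambda>y. h (y i)) \<in> borel_measurable (PiM {..<n} (\<lambda>_. \<nu>))" if "i < n" for i
      by (rule measurable_compose[OF measurable_component_singleton[of i "{..<n}" "\<lambda>_. \<nu>"] hm]) (use that in simp)
    have Pm: "(\<lambda>y. ennreal (\<Prod>i<n. h (y i))) \<in> borel_measurable (PiM {..<n} (\<lambda>_. \<nu>))"
      using hmi by (intro measurable_compose[OF _ measurable_ennreal] borel_measurable_prod) auto
    have "emeasure (density (PiM {..<n} (\<lambda>_. \<nu>)) (\<lambda>y. ennreal (\<Prod>i<n. h (y i)))) (PiE {..<n} A)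
        = (\<integral>\<^sup>+y. ennreal (\<Prod>i<n. h (y i)) * indicator (PiE {..<n} A) y \<partial>PiM {..<n} (\<lambda>_. \<nu>))"
      by (rule emeasure_density[OF Pm]) (use A' in \<open>auto intro!: sets_PiM_I_finite\<close>)
    also have "\<dots> = (\<integral>\<^sup>+y. (\<Prod>i<n. ennreal (h (y i)) * indicator (A i) (y i)) \<partial>PiM {..<n} (\<lambda>_. \<nu>))"
    proof (rule nn_integral_cong)
      fix y assume "y \<in> space (PiM {..<n} (\<lambda>_. \<nu>))"
      then have "y \<in> extensional {..<n}" by (auto simp: space_PiM PiE_def)
      then show "ennreal (\<Prod>i<n. h (y i)) * indicator (PiE {..<n} A) y = (\<Prod>i<n. ennreal (h (y i)) * indicator (A i) (y i))"
        by (simp add: indicator_PiE_prod prod.distrib prod_ennreal h0)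
    qed
    also have "\<dots> = (\<Prod>i<n. \<integral>\<^sup>+x. ennreal (h x) * indicator (A i) x \<partial>\<nu>)"
      by (rule N.product_nn_integral_prod) (use hm A' in auto)
    also have "\<dots> = (\<Prod>i<n. emeasure ?D (A i))"
      by (rule prod.cong[OF refl]) (use hm A' in \<open>simp add: emeasure_density\<close>)
    finally show "emeasure (density (PiM {..<n} (\<lambda>_. \<nu>)) (\<lambda>y. ennreal (\<Prod>i<n. h (y i)))) (PiE {..<n} A)
        = (\<Prod>i\<in>{..<n}. emeasure ?D (A i))" by simp
  qed
  then show ?thesis by simp
qed

lemma prod_diff_bound:
  fixes a b :: "nat \<Rightarrow> real"
  assumes a: "\<And>i. 0 \<le> a i \<and> a i \<le> 1" and b: "\<And>i. 0 \<le> b i \<and> b i \<le> 1"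
    and d: "\<And>i. \<bar>a i - b i\<bar> \<le> \<delta>"
  shows "\<bar>(\<Prod>i<n. a i) - (\<Prod>i<n. b i)\<bar> \<le> real n * \<delta>"
proof (induction n)
  case 0 then show ?case by simp
next
  case (Suc n)
  have pa: "\<bar>a n\<bar> \<le> 1" using a[of n] by simp
  have pb: "\<bar>\<Prod>i<n. b i\<bar> \<le> 1" using b by (simp add: prod_le_1 abs_prod)
  have "(\<Prod>i<Suc n. a i) - (\<Prod>i<Suc n. b i) = ((\<Prod>i<n. a i) - (\<Prod>i<n. b i)) * a n + (\<Prod>i<n. b i) * (a n - b n)"
    by (simp add: algebra_simps)
  also have "\<bar>\<dots>\<bar> \<le> \<bar>(\<Prod>i<n. a i) - (\<Prod>i<n. b i)\<bar> * \<bar>a n\<bar> + \<bar>\<Prod>i<n. b i\<bar> * \<bar>a n - b n\<bar>"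
    by (metis abs_mult abs_triangle_ineq)
  also have "\<dots> \<le> real n * \<delta> * 1 + 1 * \<delta>"
    using Suc pa pb d[of n] by (intro add_mono mult_mono) auto
  finally show ?case by (simp add: algebra_simps)
qed

lemma exp_lip:
  assumes "0 \<le> (a::real)" "0 \<le> b"
  shows "\<bar>exp (- a) - exp (- b)\<bar> \<le> \<bar>a - b\<bar>"
proof -
  have key: "\<bar>exp (- a) - exp (- b)\<bar> \<le> b - a" if "0 \<le> a" "a \<le> b" for a b :: real
  proof -
    have e1: "exp (-a) * exp (a - b) = exp (- b)" by (subst mult_exp_exp) simp
    have e2: "1 + (a - b) \<le> exp (a - b)" by (rule exp_ge_add_one_self)
    have e3: "exp (-b) \<le> exp (-a)" using that by simp
    have e4: "exp (-a) \<le> 1" using that by simp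
    have "exp (-a) * (1 + (a - b)) \<le> exp (-a) * exp (a - b)"
      by (rule mult_left_mono[OF e2]) simp
    then have "exp (-a) - exp (-b) \<le> exp (-a) * (b - a)" using e1 by (simp add: algebra_simps)
    also have "\<dots> \<le> 1 * (b - a)" by (rule mult_right_mono[OF e4]) (use that in simp)
    finally show ?thesis using e3 by simp
  qed
  show ?thesis
  proof (cases "a \<le> b")
    case True then show ?thesis using key[OF assms(1) True] by simp
  next
    case False then show ?thesis using key[OF assms(2), of a] by (simp add: abs_minus_commute)
  qed
qed

lemma pe_perturb:
  fixes \<nu> :: "'m measure"
  assumes fm: "finite_measure \<nu>"
    and hm: "h \<in> borel_measurable \<nu>" and h0: "\<And>x. 0 \<le> h x" and h1: "\<And>x. h x \<le> 1"
    and hm': "h' \<in> borel_measurable \<nu>" and h0': "\<And>x. 0 \<le> h' x" and h1': "\<And>x. h' x \<le> 1"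
    and d: "\<And>x. \<bar>h x - h' x\<bar> \<le> \<delta>"
    and meas: "\<And>n. (\<lambda>y. \<Phi> (mset (map y [0..<n]))) \<in> borel_measurable (PiM {..<n} (\<lambda>_. \<nu>))"
    and bd: "\<And>X. \<bar>\<Phi> X\<bar> \<le> B"
  shows "\<bar>poisson_expectation (density \<nu> (\<lambda>x. ennreal (h x))) \<Phi> - poisson_expectation (density \<nu> (\<lambda>x. ennreal (h' x))) \<Phi>\<bar>
     \<le> \<delta> * B * (measure \<nu> (space \<nu>) * exp (measure \<nu> (space \<nu>)) + exp (2 * measure \<nu> (space \<nu>)))"
proof -
  interpret fN: finite_measure \<nu> by fact
  let ?V = "measure \<nu> (space \<nu>)"
  let ?D = "density \<nu> (\<lambda>x. ennreal (h x))"
  let ?D' = "density \<nu> (\<lambda>x. ennreal (h' x))"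
  have B0: "0 \<le> B" using bd[of "{#}"] by linarith
  have d0: "0 \<le> \<delta>" using d[of undefined] by linarith
  have V0: "0 \<le> ?V" by simp
  note fD = dens_finite[OF fm hm h0 h1] and fD' = dens_finite[OF fm hm' h0' h1']
  have mD: "(\<lambda>y. \<Phi> (mset (map y [0..<n]))) \<in> borel_measurable (PiM {..<n} (\<lambda>_. density \<nu> (\<lambda>x. ennreal (g x))))" for n g
  proof -
    have e: "sets (PiM {..<n} (\<lambda>_. density \<nu> (\<lambda>x. ennreal (g x)))) = sets (PiM {..<n} (\<lambda>_. \<nu>))"
      by (rule sets_PiM_cong) simp_all
    show ?thesis using meas[of n] by (simp add: measurable_cong_sets[OF e refl])
  qed
  define a where "a = measure ?D (space ?D)"
  define b where "b = measure ?D' (space ?D')"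
  have a_eq: "a = (\<integral>x. h x \<partial>\<nu>)" and b_eq: "b = (\<integral>x. h' x \<partial>\<nu>)" using fD(2) fD'(2) by (simp_all add: a_def b_def)
  have "(\<integral>x. h x \<partial>\<nu>) \<le> (\<integral>x. 1 \<partial>\<nu>)"
    by (rule integral_mono) (use fD(3) h1 in auto)
  then have a0: "0 \<le> a" "a \<le> ?V" unfolding a_eq
    using h0 by (auto intro!: integral_nonneg_AE)
  have b0: "0 \<le> b" unfolding b_eq using h0' by (auto intro!: integral_nonneg_AE)
  have ab: "\<bar>a - b\<bar> \<le> \<delta> * ?V"
  proof -
    have "\<bar>a - b\<bar> = \<bar>\<integral>x. h x - h' x \<partial>\<nu>\<bar>" unfolding a_eq b_eq using fD(3) fD'(3) by simp
    also have "\<dots> \<le> (\<integral>x. \<bar>h x - h' x\<bar> \<partial>\<nu>)" by (rule integral_abs_bound)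
    also have "\<dots> \<le> (\<integral>x. \<delta> \<partial>\<nu>)"
      by (rule integral_mono) (use fD(3) fD'(3) d in auto)
    also have "\<dots> = \<delta> * ?V" by (simp add: mult.commute)
    finally show ?thesis .
  qed
  define t where "t = pterm ?D \<Phi>"
  define t' where "t' = pterm ?D' \<Phi>"
  note sD = pterm_summable[OF fD(1) mD[of _ h] bd, folded t_def]
  note sD' = pterm_summable[OF fD'(1) mD[of _ h'] bd, folded t'_def]
  have prodm: "(\<lambda>y. \<Prod>i<n. g (y i)) \<in> borel_measurable (PiM {..<n} (\<lambda>_. \<nu>))" if "g \<in> borel_measurable \<nu>" for g :: "'m \<Rightarrow> real" and n :: nat
  proof -
    have "(\<lambda>y. g (y i)) \<in> borel_measurable (PiM {..<n} (\<lambda>_. \<nu>))" if "i < n" for i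
      by (rule measurable_compose[OF measurable_component_singleton[of i "{..<n}" "\<lambda>_. \<nu>"] \<open>g \<in> borel_measurable \<nu>\<close>]) (use that in simp)
    then show ?thesis by (intro borel_measurable_prod) auto
  qed
  have tform: "pterm (density \<nu> (\<lambda>x. ennreal (g x))) \<Phi> n = (\<integral>y. (\<Prod>i<n. g (y i)) * \<Phi> (mset (map y [0..<n])) \<partial>PiM {..<n} (\<lambda>_. \<nu>)) / fact n"
    if "g \<in> borel_measurable \<nu>" "\<And>x. 0 \<le> g x" "\<And>x. g x \<le> 1" for g :: "'m \<Rightarrow> real" and n :: nat
    unfolding pterm_def PiM_density[OF fm that]
    by (subst integral_density) (use meas prodm[OF that(1)] that(2) in \<open>auto intro!: prod_nonneg\<close>)
  have tdiff: "\<bar>t n - t' n\<bar> \<le> \<delta> * B * (2 * ?V) ^ n / fact n" for n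
  proof -
    let ?P = "PiM {..<n} (\<lambda>_. \<nu>)"
    let ?f = "\<lambda>y. (\<Prod>i<n. h (y i)) * \<Phi> (mset (map y [0..<n]))"
    let ?f' = "\<lambda>y. (\<Prod>i<n. h' (y i)) * \<Phi> (mset (map y [0..<n]))"
    have pb: "\<bar>\<Prod>i<n. g (y i)\<bar> \<le> 1" if "\<And>x. 0 \<le> g x" "\<And>x. g x \<le> 1" for g :: "'m \<Rightarrow> real" and y :: "nat \<Rightarrow> 'm"
      using that by (simp add: prod_le_1 abs_prod)
    have fb: "\<bar>?f y\<bar> \<le> B" "\<bar>?f' y\<bar> \<le> B" for y
      using mult_mono[OF pb[of h y, OF h0 h1] bd[of "mset (map y [0..<n])"]] 
        mult_mono[OF pb[of h' y, OF h0' h1'] bd[of "mset (map y [0..<n])"]] B0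
      by (auto simp: abs_mult)
    have fm1: "?f \<in> borel_measurable ?P" "?f' \<in> borel_measurable ?P"
      using prodm[OF hm] prodm[OF hm'] meas by auto
    have i1: "integrable ?P ?f" "integrable ?P ?f'"
      using term_bound(1)[OF fm fm1(1) fb(1)] term_bound(1)[OF fm fm1(2) fb(2)] by auto
    have db: "\<bar>?f y - ?f' y\<bar> \<le> real n * \<delta> * B" for y
    proof -
      have "\<bar>?f y - ?f' y\<bar> = \<bar>(\<Prod>i<n. h (y i)) - (\<Prod>i<n. h' (y i))\<bar> * \<bar>\<Phi> (mset (map y [0..<n]))\<bar>"
        by (simp add: abs_mult[symmetric] left_diff_distrib)
      also have "\<dots> \<le> (real n * \<delta>) * B"
        using prod_diff_bound[of "\<lambda>i. h (y i)" "\<lambda>i. h' (y i)" \<delta> n] h0 h1 h0' h1' d bd B0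
        by (intro mult_mono) auto
      finally show ?thesis .
    qed
    have "t n - t' n = (\<integral>y. ?f y - ?f' y \<partial>?P) / fact n"
      unfolding t_def t'_def tform[OF hm h0 h1] tform[OF hm' h0' h1'] Bochner_Integration.integral_diff[OF i1]
      by (simp only: diff_divide_distrib)
    also have "\<bar>\<dots>\<bar> \<le> (real n * \<delta> * B) * ?V ^ n / fact n"
      using term_bound(2)[OF fm _ db] fm1 by (simp add: divide_right_mono)
    also have "\<dots> \<le> (2 ^ n * \<delta> * B) * ?V ^ n / fact n"
    proof -
      have "real n \<le> real (2 ^ n)" using less_exp[of n] by linarith
      then have "real n \<le> 2 ^ n" by simp
      then show ?thesis using d0 B0 by (intro divide_right_mono mult_right_mono) auto
    qed
    also have "\<dots> = \<delta> * B * (2 * ?V) ^ n / fact n" by (simp add: power_mult_distrib)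
    finally show ?thesis .
  qed
  have s2: "(\<lambda>n. \<delta> * B * (2 * ?V) ^ n / fact n) sums (\<delta> * B * exp (2 * ?V))"
    using sums_mult[OF exp_sums_real[of "2 * ?V"], of "\<delta> * B"] by (simp add: mult.assoc)
  have sdiff: "summable (\<lambda>n. \<bar>t n - t' n\<bar>)"
    by (rule summable_comparison_test[OF _ sums_summable[OF s2]]) (use tdiff in auto)
  have "\<bar>suminf t - suminf t'\<bar> = \<bar>\<Sum>n. t n - t' n\<bar>" using suminf_diff[OF sD(1) sD'(1)] by simp
  also have "\<dots> \<le> (\<Sum>n. \<bar>t n - t' n\<bar>)" by (rule summable_rabs[OF sdiff])
  also have "\<dots> \<le> \<delta> * B * exp (2 * ?V)"
    using suminf_le[OF tdiff sdiff sums_summable[OF s2]] s2 by (simp add: sums_iff)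
  finally have st: "\<bar>suminf t - suminf t'\<bar> \<le> \<delta> * B * exp (2 * ?V)" .
  have sa0: "\<bar>suminf t\<bar> \<le> B * exp a" using sD(3) unfolding a_def .
  have "B * exp a \<le> B * exp ?V" using a0(2) B0 by (intro mult_left_mono) auto
  then have sa: "\<bar>suminf t\<bar> \<le> B * exp ?V" using sa0 by linarith
  have "poisson_expectation ?D \<Phi> - poisson_expectation ?D' \<Phi>
      = (exp (-a) - exp (-b)) * suminf t + exp (-b) * (suminf t - suminf t')"
    unfolding pe_def2 a_def b_def t_def t'_def by (simp add: algebra_simps)
  also have "\<bar>\<dots>\<bar> \<le> \<bar>exp (-a) - exp (-b)\<bar> * \<bar>suminf t\<bar> + exp (-b) * \<bar>suminf t - suminf t'\<bar>"
    by (rule order_trans[OF abs_triangle_ineq]) (simp add: abs_mult)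
  also have "\<dots> \<le> (\<delta> * ?V) * (B * exp ?V) + 1 * (\<delta> * B * exp (2 * ?V))"
    using exp_lip[OF a0(1) b0] ab sa st b0 by (intro add_mono mult_mono) auto
  also have "\<dots> = \<delta> * B * (?V * exp ?V + exp (2 * ?V))" by (simp add: algebra_simps)
  finally show ?thesis .
qed

context Sctx begin

lemma main:
  fixes \<nu> :: "'m measure"
  assumes nu_sets: "sets \<nu> = sets borel" and nu_finite: "finite_measure \<nu>"
  shows "\<exists>U>0. \<forall>u\<in>{0..U}. \<exists>\<rho>::'m measure.
           sets \<rho> = sets borel \<and> finite_measure \<rho> \<and>
           (\<forall>A\<in>sets borel.
              ennreal u * emeasure \<nu> A = (\<integral>\<^sup>+x\<in>A. ennreal (F_fun S \<rho> x) \<partial>\<rho>))"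
proof -
  interpret fN: finite_measure \<nu> by fact
  define V where "V = measure \<nu> (space \<nu>)"
  have V0: "0 \<le> V" unfolding V_def by simp
  define C where "C = K * (V * exp V + exp (2 * V))"
  have C0: "0 \<le> C" unfolding C_def using K_pos V0 by simp
  define m0 where "m0 = exp (- V) * c0"
  have m0: "0 < m0" unfolding m0_def using c0_pos by simp
  define U where "U = min m0 (m0\<^sup>2 / (2 * C + 1))"
  have U0: "0 < U" unfolding U_def using m0 C0 by simp
  have Um0: "U \<le> m0" unfolding U_def by simp
  have UC: "U * C \<le> m0\<^sup>2 / 2"
  proof -
    have "U * C \<le> m0\<^sup>2 / (2 * C + 1) * C" using C0 unfolding U_def by (intro mult_right_mono) auto
    also have "\<dots> = m0\<^sup>2 * (C / (2 * C + 1))" by simp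
    also have "\<dots> \<le> m0\<^sup>2 * (1/2)" using C0 by (intro mult_left_mono) (auto simp: field_simps)
    finally show ?thesis by simp
  qed
  show ?thesis
  proof (intro exI[of _ U] conjI ballI U0)
    fix u assume "u \<in> {0..U}"
    then have u0: "0 \<le> u" and uU: "u \<le> U" by auto
    define good where "good g \<longleftrightarrow> g \<in> borel_measurable \<nu> \<and> (\<forall>x. 0 \<le> g x \<and> g x \<le> 1)" for g :: "'m \<Rightarrow> real"
    define D where "D g = density \<nu> (\<lambda>x. ennreal (g x))" for g :: "'m \<Rightarrow> real"
    define T where "T g x = u / F_fun S (D g) x" for g :: "'m \<Rightarrow> real" and x
    have Dsets: "sets (D g) = sets borel" for g unfolding D_def using nu_sets by simp
    have Dfin: "finite_measure (D g)" if "good g" for g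
      using that unfolding good_def D_def by (intro dens_finite(1)[OF nu_finite]) auto
    have Dmeas: "measure (D g) (space (D g)) \<le> V" if "good g" for g
    proof -
      have gi: "integrable \<nu> g" using that unfolding good_def by (intro dens_finite(3)[OF nu_finite]) auto
      have "measure (D g) (space (D g)) = (\<integral>x. g x \<partial>\<nu>)"
        using that unfolding good_def D_def by (intro dens_finite(2)[OF nu_finite]) auto
      also have "\<dots> \<le> (\<integral>x. 1 \<partial>\<nu>)"
        by (rule integral_mono) (use gi that in \<open>auto simp: good_def\<close>)
      finally show ?thesis unfolding V_def by simp
    qed
    have Flow: "m0 \<le> F_fun S (D g) x" if "good g" for g x
    proof -
      have "m0 \<le> exp (- measure (D g) (space (D g))) * c0"
        unfolding m0_def using Dmeas[OF that] c0_pos by (intro mult_right_mono) auto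
      also have "\<dots> \<le> F_fun S (D g) x" by (rule F_lower[OF Dsets Dfin[OF that]])
      finally show ?thesis .
    qed
    have Fmeas: "F_fun S (D g) \<in> borel_measurable \<nu>" if "good g" for g
      using F_meas[OF Dsets Dfin[OF that]] by (simp only: measurable_cong_sets[OF nu_sets refl])
    have Tgood: "good (T g)" if "good g" for g
    proof -
      have "T g \<in> borel_measurable \<nu>" unfolding T_def using Fmeas[OF that] by measurable
      moreover have "0 \<le> T g x \<and> T g x \<le> 1" for x
      proof -
        have F: "m0 \<le> F_fun S (D g) x" by (rule Flow[OF that])
        have "T g x \<le> u / m0" unfolding T_def using F m0 u0 by (intro divide_left_mono) auto
        also have "\<dots> \<le> 1" using uU Um0 m0 by simp
        finally show ?thesis unfolding T_def using F m0 u0 by simp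
      qed
      ultimately show ?thesis unfolding good_def by blast
    qed
    have Tcontr: "\<bar>T g x - T g' x\<bar> \<le> \<delta> / 2" if "good g" "good g'" "\<And>x. \<bar>g x - g' x\<bar> \<le> \<delta>" for g g' x \<delta>
    proof -
      have gm: "g \<in> borel_measurable \<nu>" "\<And>x. 0 \<le> g x" "\<And>x. g x \<le> 1"
        and gm': "g' \<in> borel_measurable \<nu>" "\<And>x. 0 \<le> g' x" "\<And>x. g' x \<le> 1"
        using that(1,2) unfolding good_def by auto
      have Fd: "\<bar>F_fun S (D g) x - F_fun S (D g') x\<bar> \<le> \<delta> * C"
        unfolding F_eq D_def C_def V_def
        using pe_perturb[OF nu_finite gm gm' that(3) PhiF_meas[OF nu_sets, where x=x] PhiF_bounds(3)[where x=x]]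
        by (simp add: algebra_simps)
      have F1: "m0 \<le> F_fun S (D g) x" and F2: "m0 \<le> F_fun S (D g') x" using Flow that by auto
      have "T g x - T g' x = u * (F_fun S (D g') x - F_fun S (D g) x) / (F_fun S (D g) x * F_fun S (D g') x)"
        unfolding T_def using F1 F2 m0 by (simp add: field_simps)
      also have "\<bar>\<dots>\<bar> = u * \<bar>F_fun S (D g) x - F_fun S (D g') x\<bar> / (F_fun S (D g) x * F_fun S (D g') x)"
        using F1 F2 m0 u0 by (simp add: abs_mult abs_minus_commute)
      also have "\<dots> \<le> u * (\<delta> * C) / (m0 * m0)"
        using F1 F2 m0 u0 Fd by (intro frac_le mult_left_mono mult_mono) auto
      also have "\<dots> \<le> U * (\<delta> * C) / (m0 * m0)"
      proof -
        have "0 \<le> \<delta>" using that(3)[of x] by linarith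
        then show ?thesis using uU C0 m0 by (intro divide_right_mono mult_right_mono) auto
      qed
      also have "\<dots> = \<delta> * (U * C) / m0\<^sup>2" by (simp add: power2_eq_square)
      also have "\<dots> \<le> \<delta> * (m0\<^sup>2 / 2) / m0\<^sup>2"
      proof -
        have "0 \<le> \<delta>" using that(3)[of x] by linarith
        then show ?thesis using UC by (intro divide_right_mono mult_left_mono) auto
      qed
      also have "\<dots> = \<delta> / 2" using m0 by simp
      finally show ?thesis .
    qed
    show "\<exists>\<rho>::'m measure. sets \<rho> = sets borel \<and> finite_measure \<rho> \<and>
           (\<forall>A\<in>sets borel. ennreal u * emeasure \<nu> A = (\<integral>\<^sup>+x\<in>A. ennreal (F_fun S \<rho> x) \<partial>\<rho>))"
    proof -
    define hs where "hs = rec_nat (\<lambda>_. 0) (\<lambda>k g. T g)"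
    have hs0: "hs 0 = (\<lambda>_. 0)" unfolding hs_def by simp
    have hsS: "hs (Suc k) = T (hs k)" for k unfolding hs_def by simp
    have hgood: "good (hs k)" for k
    proof (induction k)
      case 0 show ?case unfolding hs0 good_def by simp
    next
      case (Suc k) show ?case unfolding hsS by (rule Tgood[OF Suc])
    qed
    have hstep: "\<bar>hs (Suc k) x - hs k x\<bar> \<le> (1/2) ^ k" for k x
    proof (induction k arbitrary: x)
      case 0
      have "0 \<le> hs (Suc 0) x \<and> hs (Suc 0) x \<le> 1" using hgood[of "Suc 0"] unfolding good_def by blast
      then show ?case unfolding hs0 by simp
    next
      case (Suc k)
      have "\<bar>T (hs (Suc k)) x - T (hs k) x\<bar> \<le> (1/2) ^ k / 2"
        by (rule Tcontr[OF hgood hgood Suc.IH])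
      moreover have "hs (Suc (Suc k)) x - hs (Suc k) x = T (hs (Suc k)) x - T (hs k) x"
        by (simp only: hsS)
      ultimately show ?case by simp
    qed
    define dd where "dd k x = hs (Suc k) x - hs k x" for k x
    have dds: "summable (\<lambda>k. \<bar>dd k x\<bar>)" for x
    proof (rule summable_comparison_test)
      have "norm \<bar>dd k x\<bar> \<le> (1/2::real) ^ k" for k using hstep[of k x] by (simp add: dd_def)
      then show "\<exists>N. \<forall>n\<ge>N. norm \<bar>dd n x\<bar> \<le> (1/2::real) ^ n" by blast
      show "summable (\<lambda>n. (1/2::real) ^ n)" by simp
    qed
    have dds': "summable (\<lambda>k. dd k x)" for x by (rule summable_rabs_cancel[OF dds])
    define hl where "hl x = suminf (\<lambda>k. dd k x)" for x
    have hs_sum: "hs k x = (\<Sum>j<k. dd j x)" for k x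
      unfolding dd_def sum_lessThan_telescope[of "\<lambda>i. hs i x"] by (simp add: hs0)
    have hconv: "(\<lambda>k. hs k x) \<longlonglongrightarrow> hl x" for x
      unfolding hs_sum hl_def by (rule summable_LIMSEQ[OF dds'])
    have hbound: "\<bar>hs k x - hl x\<bar> \<le> 2 * (1/2) ^ k" for k x
    proof -
      have "hl x = (\<Sum>n. dd (n + k) x) + (\<Sum>i<k. dd i x)"
        unfolding hl_def by (rule suminf_split_initial_segment[OF dds'])
      then have e: "hl x - hs k x = (\<Sum>n. dd (n + k) x)" by (simp add: hs_sum)
      have s1: "summable (\<lambda>n. \<bar>dd (n + k) x\<bar>)"
        using summable_ignore_initial_segment[OF dds[of x], of k] by simp
      have g: "(\<lambda>n. (1/2::real) ^ n * (1/2) ^ k) sums (2 * (1/2) ^ k)"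
        using sums_mult2[OF geometric_sums[of "1/2::real"], of "(1/2)^k"] by simp
      have "\<bar>\<Sum>n. dd (n + k) x\<bar> \<le> (\<Sum>n. \<bar>dd (n + k) x\<bar>)" by (rule summable_rabs[OF s1])
      also have "\<dots> \<le> (\<Sum>n. (1/2::real) ^ n * (1/2) ^ k)"
      proof (rule suminf_le[OF _ s1 sums_summable[OF g]])
        fix n
        show "\<bar>dd (n + k) x\<bar> \<le> (1/2::real) ^ n * (1/2) ^ k"
          using hstep[of "n + k" x] unfolding dd_def by (simp add: power_add)
      qed
      also have "\<dots> = 2 * (1/2) ^ k" using g by (simp add: sums_iff)
      finally show ?thesis using e by (simp add: abs_minus_commute)
    qed
    have hlgood: "good hl"
    proof -
      have "hl \<in> borel_measurable \<nu>"
        by (rule borel_measurable_LIMSEQ_real[where u=hs]) (use hconv hgood in \<open>auto simp: good_def\<close>)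
      moreover have "0 \<le> hl x \<and> hl x \<le> 1" for x
      proof
        show "0 \<le> hl x" by (rule LIMSEQ_le_const[OF hconv]) (use hgood in \<open>auto simp: good_def\<close>)
        show "hl x \<le> 1" by (rule LIMSEQ_le_const2[OF hconv]) (use hgood in \<open>auto simp: good_def\<close>)
      qed
      ultimately show ?thesis unfolding good_def by blast
    qed
    have hfix: "hl x = T hl x" for x
    proof -
      have "(\<lambda>k. T (hs k) x - T hl x) \<longlonglongrightarrow> 0"
      proof (rule Lim_null_comparison[OF _ LIMSEQ_realpow_zero[of "1/2::real"]])
        show "\<forall>\<^sub>F k in sequentially. norm (T (hs k) x - T hl x) \<le> (1/2) ^ k"
        proof (intro always_eventually allI)
          fix k
          have "\<bar>T (hs k) x - T hl x\<bar> \<le> (2 * (1/2) ^ k) / 2"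
            by (rule Tcontr[OF hgood hlgood hbound])
          then show "norm (T (hs k) x - T hl x) \<le> (1/2) ^ k" by simp
        qed
      qed auto
      then have "(\<lambda>k. T (hs k) x) \<longlonglongrightarrow> T hl x" by (rule LIM_zero_cancel)
      then have "(\<lambda>k. hs (Suc k) x) \<longlonglongrightarrow> T hl x" by (simp add: hsS)
      moreover have "(\<lambda>k. hs (Suc k) x) \<longlonglongrightarrow> hl x" using hconv by (rule LIMSEQ_Suc)
      ultimately show ?thesis using LIMSEQ_unique by blast
    qed
    have prodeq: "hl x * F_fun S (D hl) x = u" for x
    proof -
      have "0 < F_fun S (D hl) x" using Flow[OF hlgood, of x] m0 by linarith
      then show ?thesis using hfix[of x] unfolding T_def by (simp add: field_simps)
    qed
    have hlm: "hl \<in> borel_measurable \<nu>" and hl0: "\<And>x. 0 \<le> hl x" using hlgood unfolding good_def by auto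
    show ?thesis
    proof (intro exI[of _ "D hl"] conjI ballI)
      show "sets (D hl) = sets borel" by (rule Dsets)
      show "finite_measure (D hl)" by (rule Dfin[OF hlgood])
      fix A :: "'m set" assume A: "A \<in> sets borel"
      then have A': "A \<in> sets \<nu>" using nu_sets by simp
      have "(\<integral>\<^sup>+x\<in>A. ennreal (F_fun S (D hl) x) \<partial>D hl)
          = (\<integral>\<^sup>+x. ennreal (hl x) * (ennreal (F_fun S (D hl) x) * indicator A x) \<partial>\<nu>)"
        unfolding D_def
        by (rule nn_integral_density) (use hlm Fmeas[OF hlgood] A' in \<open>auto simp: D_def\<close>)
      also have "\<dots> = (\<integral>\<^sup>+x. ennreal u * indicator A x \<partial>\<nu>)"
      proof (rule nn_integral_cong)
        fix x
        have "ennreal (hl x) * ennreal (F_fun S (D hl) x) = ennreal u"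
        proof -
          have Fp: "0 \<le> F_fun S (D hl) x" using Flow[OF hlgood, of x] m0 by linarith
          show ?thesis using ennreal_mult[OF hl0[of x] Fp] prodeq[of x] by simp
        qed
        then show "ennreal (hl x) * (ennreal (F_fun S (D hl) x) * indicator A x) = ennreal u * indicator A x"
          by (simp add: mult.assoc[symmetric])
      qed
      also have "\<dots> = ennreal u * emeasure \<nu> A" by (rule nn_integral_cmult_indicator[OF A'])
      finally show "ennreal u * emeasure \<nu> A = (\<integral>\<^sup>+x\<in>A. ennreal (F_fun S (D hl) x) \<partial>D hl)" by simp
    qed
    qed
  qed
qed

end

theorem theorem3p1:
  fixes \<nu> :: "'m::polish_space measure"
    and S :: "'m multiset \<Rightarrow> real"
    and K :: real
  assumes nu_sets: "sets \<nu> = sets borel"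
    and nu_finite: "finite_measure \<nu>"
    and S_nonneg: "\<And>g. S g \<ge> 0"
    and S_zero: "S {#} = 0"
    and S_mono: "\<And>g h. S g \<le> S (g + h)"
    and S_lip: "\<And>g h. \<bar>S g - S h\<bar> \<le> K * was_dist g h"
    and S_inf: "(INF m. S {#m#}) > 0"
  shows "\<exists>U>0. \<forall>u\<in>{0..U}. \<exists>\<rho>::'m measure.
           sets \<rho> = sets borel \<and> finite_measure \<rho> \<and>
           (\<forall>A\<in>sets borel.
              ennreal u * emeasure \<nu> A = (\<integral>\<^sup>+x\<in>A. ennreal (F_fun S \<rho> x) \<partial>\<rho>))"
  proof -
  have "Sctx S K" by (rule Sctx.intro) (fact S_nonneg S_zero S_mono S_lip S_inf)+
  from Sctx.main[OF this nu_sets nu_finite] show ?thesis .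
qed

end
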